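(* In the projected SGD setting, set the step sizes $\eta_t=\frac{1}{\lambda(t+32)}$. Then for any $\delta\in(0,1)$, $$\mathbb P\Big(\forall t\ge1:\ L_t\le1008\cdot\frac{B^2}{\lambda^2}\cdot\frac{\log(\delta^{-1})+2\log\log(t+9)}{t+32}\Big)\ge1-\delta.$$
   Context: Projected SGD setting: $\mathcal X\subset\mathbb R^d$ is a compact convex set with non-empty interior; $F:\mathcal X\to\mathbb R$ is differentiable and $\lambda$-strongly convex ($\lambda>0$): $F(\bm y)\ge F(\bm x)+\langle\bm y-\bm x,\nabla F(\bm x)\rangle+\frac\lambda2\|\bm y-\bm x\|^2$ for all $\bm x,\bm y\in\mathcal X$; $\bm x^*$ is the minimizer of $F$ over $\mathcal X$. $\bm\xi_1,\bm\xi_2,\dots$ are i.i.d. random vectors in $\mathbb R^{d_1}$, and $g:\mathcal X\times\mathbb R^{d_1}\to\mathbb R^d$ is measurable with $\mathbb E\big(g(\bm x_{t-1},\bm\xi_t)\mid\bm\xi_1,\dots,\bm\xi_{t-1}\big)=\nabla F(\bm x_{t-1})$ and $\max\{\|g-\nabla F\|,\|g\|\}\le B$ almost surely, for a constant $B>0$. $\Pi_{\mathcal X}(\bm y)=\arg\min_{\bm x\in\mathcal X}\|\bm x-\bm y\|$ is the Euclidean projection. Given $\bm x_0\in\mathcal X$ and deterministic step sizes $\eta_t>0$, the iterates are $\bm x_t=\Pi_{\mathcal X}\big(\bm x_{t-1}-\eta_t g(\bm x_{t-1},\bm\xi_t)\big)$. $\mathcal F_t=\sigma(\bm\xi_1,\dots,\bm\xi_t)$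 and $L_t:=\|\bm x_t-\bm x^*\|^2$. *)

theory Defs
  imports "HOL-Analysis.Analysis" "HOL-Probability.Probability"
begin

definition sgd_filtration :: "'w measure \<Rightarrow> (nat \<Rightarrow> 'w \<Rightarrow> 'e::topological_space) \<Rightarrow> nat \<Rightarrow> 'w measure" where
  "sgd_filtration M \<xi> t =
     sigma (space M) {\<xi> i -` A \<inter> space M | i A. i \<in> {1..t} \<and> A \<in> sets borel}"

fun sgd_iter :: "'x::euclidean_space set \<Rightarrow> (nat \<Rightarrow> real) \<Rightarrow> ('x \<Rightarrow> 'e \<Rightarrow> 'x) \<Rightarrow> 'x
                  \<Rightarrow> (nat \<Rightarrow> 'w \<Rightarrow> 'e) \<Rightarrow> nat \<Rightarrow> 'w \<Rightarrow> 'x" where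
  "sgd_iter X \<eta> g x0 \<xi> 0 \<omega> = x0"
| "sgd_iter X \<eta> g x0 \<xi> (Suc t) \<omega> =
     closest_point X (sgd_iter X \<eta> g x0 \<xi> t \<omega> - \<eta> (Suc t) *\<^sub>R g (sgd_iter X \<eta> g x0 \<xi> t \<omega>) (\<xi> (Suc t) \<omega>))"

end

theory Submission
  imports Defs
begin


lemma ville:
  fixes M :: "'a measure" and Y :: "nat \<Rightarrow> 'a \<Rightarrow> real" and Gs :: "nat \<Rightarrow> 'a set set" and c :: real
  assumes PS: "prob_space M" and cpos: "c > 0"
    and Ymeas: "\<And>s. Y s \<in> borel_measurable M" and Yint: "\<And>s. integrable M (Y s)"
    and Ynn: "\<And>s \<omega>. Y s \<omega> \<ge> 0"
    and G_sub: "\<And>s. Gs s \<subseteq> sets M" and G_mono: "\<And>s. Gs s \<subseteq> Gs (Suc s)"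
    and G_Int: "\<And>s A B. A \<in> Gs s \<Longrightarrow> B \<in> Gs s \<Longrightarrow> A \<inter> B \<in> Gs s"
    and G_Y: "\<And>s. {\<omega> \<in> space M. Y s \<omega> < c} \<in> Gs s"
    and super: "\<And>s N. N \<in> Gs s \<Longrightarrow> (\<integral>\<omega>. Y (Suc s) \<omega> * indicator N \<omega> \<partial>M) \<le> (\<integral>\<omega>. Y s \<omega> * indicator N \<omega> \<partial>M)"
  shows "c * measure M {\<omega> \<in> space M. \<exists>s\<le>T. Y s \<omega> \<ge> c} \<le> (\<integral>\<omega>. Y 0 \<omega> \<partial>M)"
proof -
  interpret prob_space M by (rule PS)
  define Nn where "Nn n = {\<omega> \<in> space M. \<forall>s\<le>n. Y s \<omega> < c}" for n
  define Bn where "Bn n = {\<omega> \<in> space M. \<exists>s\<le>n. Y s \<omega> \<ge> c}" for n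
  have Ysets: "{\<omega> \<in> space M. Y s \<omega> \<ge> c} \<in> sets M" for s using Ymeas[of s] by measurable
  have claim: "Nn n \<in> Gs n \<and> c * measure M (Bn n) + (\<integral>\<omega>. Y n \<omega> * indicator (Nn n) \<omega> \<partial>M) \<le> (\<integral>\<omega>. Y 0 \<omega> \<partial>M)" for n
  proof (induction n)
    case 0
    have N0: "Nn 0 = {\<omega> \<in> space M. Y 0 \<omega> < c}" unfolding Nn_def by auto
    have B0: "Bn 0 = {\<omega> \<in> space M. Y 0 \<omega> \<ge> c}" unfolding Bn_def by auto
    have BS: "Bn 0 \<in> sets M" unfolding B0 by (rule Ysets)
    have NS: "Nn 0 \<in> sets M" using G_sub G_Y N0 by auto
    have "c * measure M (Bn 0) = (\<integral>\<omega>. c * indicator (Bn 0) \<omega> \<partial>M)"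
      using BS by simp
    also have "\<dots> \<le> (\<integral>\<omega>. Y 0 \<omega> * indicator (Bn 0) \<omega> \<partial>M)"
      using BS cpos by (intro integral_mono integrable_real_mult_indicator Yint)
         (auto simp: B0 split: split_indicator)
    finally have "c * measure M (Bn 0) + (\<integral>\<omega>. Y 0 \<omega> * indicator (Nn 0) \<omega> \<partial>M)
       \<le> (\<integral>\<omega>. Y 0 \<omega> * indicator (Bn 0) \<omega> \<partial>M) + (\<integral>\<omega>. Y 0 \<omega> * indicator (Nn 0) \<omega> \<partial>M)" by simp
    also have "\<dots> = (\<integral>\<omega>. Y 0 \<omega> * indicator (Bn 0) \<omega> + Y 0 \<omega> * indicator (Nn 0) \<omega> \<partial>M)"
      using BS NS by (simp add: integrable_real_mult_indicator Yint)
    also have "\<dots> = (\<integral>\<omega>. Y 0 \<omega> \<partial>M)"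
      by (rule Bochner_Integration.integral_cong) (auto simp: B0 N0 split: split_indicator)
    finally show ?case using G_Y N0 by simp
  next
    case (Suc n)
    have NnG: "Nn n \<in> Gs n" using Suc by simp
    have NS: "Nn n \<in> sets M" using G_sub NnG by auto
    define C where "C = Nn n \<inter> {\<omega> \<in> space M. Y (Suc n) \<omega> \<ge> c}"
    have CS: "C \<in> sets M" unfolding C_def using NS Ysets by auto
    have Nsuc: "Nn (Suc n) = Nn n \<inter> {\<omega> \<in> space M. Y (Suc n) \<omega> < c}"
      unfolding Nn_def by (auto simp: le_Suc_eq)
    have NsG: "Nn (Suc n) \<in> Gs (Suc n)" unfolding Nsuc using NnG G_mono G_Int G_Y by blast
    have NsS: "Nn (Suc n) \<in> sets M" using G_sub NsG by auto
    have BS: "Bn n \<in> sets M" unfolding Bn_def using Ymeas by measurable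
    have Bsuc: "Bn (Suc n) = Bn n \<union> C"
      unfolding Bn_def C_def Nn_def by (auto simp: le_Suc_eq not_less)
    have disj: "Bn n \<inter> C = {}" unfolding Bn_def C_def Nn_def by force
    have mB: "measure M (Bn (Suc n)) = measure M (Bn n) + measure M C"
      unfolding Bsuc using BS CS disj by (intro measure_Union) auto
    have "(\<integral>\<omega>. Y (Suc n) \<omega> * indicator (Nn (Suc n)) \<omega> \<partial>M) + c * measure M C
        = (\<integral>\<omega>. Y (Suc n) \<omega> * indicator (Nn (Suc n)) \<omega> + c * indicator C \<omega> \<partial>M)"
      using NsS CS by (subst Bochner_Integration.integral_add) (auto simp: integrable_real_mult_indicator Yint integrable_real_indicator emeasure_eq_measure)
    also have "\<dots> \<le> (\<integral>\<omega>. Y (Suc n) \<omega> * indicator (Nn n) \<omega> \<partial>M)"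
      using NsS CS NS
      by (intro integral_mono integrable_real_mult_indicator Yint Bochner_Integration.integrable_add
          integrable_mult_right integrable_real_indicator)
         (auto simp: emeasure_eq_measure Nsuc C_def split: split_indicator)
    also have "\<dots> \<le> (\<integral>\<omega>. Y n \<omega> * indicator (Nn n) \<omega> \<partial>M)" using super[OF NnG] .
    finally show ?case using Suc NsG mB by (simp add: algebra_simps)
  qed
  have "c * measure M (Bn T) \<le> (\<integral>\<omega>. Y 0 \<omega> \<partial>M)"
  proof -
    have "0 \<le> (\<integral>\<omega>. Y T \<omega> * indicator (Nn T) \<omega> \<partial>M)" using Ynn by (intro integral_nonneg_AE) auto
    then show ?thesis using claim[of T] by simp
  qed
  then show ?thesis unfolding Bn_def .
qed




locale sgd_loc =
  fixes M :: "'w measure"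
    and X :: "'x::euclidean_space set"
    and F :: "'x \<Rightarrow> real"
    and gradF :: "'x \<Rightarrow> 'x"
    and lam B :: real
    and xstar x0 :: 'x
    and \<xi> :: "nat \<Rightarrow> 'w \<Rightarrow> 'e::euclidean_space"
    and g :: "'x \<Rightarrow> 'e \<Rightarrow> 'x"
    and \<eta> :: "nat \<Rightarrow> real"
  assumes PS: "prob_space M"
    and cX: "compact X" and cvX: "convex X"
    and lam_pos: "lam > 0"
    and strong_conv: "\<And>x y. x \<in> X \<Longrightarrow> y \<in> X \<Longrightarrow>
           F y \<ge> F x + (y - x) \<bullet> gradF x + lam / 2 * (norm (y - x))\<^sup>2"
    and xstar: "xstar \<in> X" and xmin: "\<And>y. y \<in> X \<Longrightarrow> F xstar \<le> F y"
    and xi_meas: "\<And>i. i \<ge> 1 \<Longrightarrow> \<xi> i \<in> borel_measurable M"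
    and g_meas: "(\<lambda>(x, e). g x e) \<in> borel_measurable (restrict_space borel (X \<times> UNIV))"
    and B_pos: "B > 0"
    and x0: "x0 \<in> X"
    and step: "\<And>t. \<eta> t = 1 / (lam * (real t + 32))"
    and unbiased: "\<And>t b. t \<ge> 1 \<Longrightarrow> b \<in> Basis \<Longrightarrow>
           AE \<omega> in M. real_cond_exp M (sgd_filtration M \<xi> (t - 1))
               (\<lambda>\<omega>. g (sgd_iter X \<eta> g x0 \<xi> (t - 1) \<omega>) (\<xi> t \<omega>) \<bullet> b) \<omega>
             = gradF (sgd_iter X \<eta> g x0 \<xi> (t - 1) \<omega>) \<bullet> b"
    and bounded: "AE \<omega> in M. \<forall>t\<ge>1.
           max (norm (g (sgd_iter X \<eta> g x0 \<xi> (t - 1) \<omega>) (\<xi> t \<omega>) - gradF (sgd_iter X \<eta> g x0 \<xi> (t - 1) \<omega>)))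
               (norm (g (sgd_iter X \<eta> g x0 \<xi> (t - 1) \<omega>) (\<xi> t \<omega>))) \<le> B"
begin

abbreviation "x \<equiv> sgd_iter X \<eta> g x0 \<xi>"
abbreviation "Fl \<equiv> sgd_filtration M \<xi>"

lemma Xne: "X \<noteq> {}" using xstar by auto
lemma clX: "closed X" using cX compact_imp_closed by auto

lemma x_in: "x t \<omega> \<in> X"
  by (cases t) (auto simp: x0 closest_point_in_set[OF clX Xne])

lemma gen_sub: "{\<xi> i -` A \<inter> space M | i A. i \<in> {1..t} \<and> A \<in> sets borel} \<subseteq> Pow (space M)"
  by auto

lemma space_Fl: "space (Fl t) = space M"
  unfolding sgd_filtration_def by (rule space_measure_of[OF gen_sub])

lemma sets_Fl: "sets (Fl t) = sigma_sets (space M) {\<xi> i -` A \<inter> space M | i A. i \<in> {1..t} \<and> A \<in> sets borel}"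
  unfolding sgd_filtration_def by (rule sets_measure_of[OF gen_sub])

lemma sets_Fl_M: "sets (Fl t) \<subseteq> sets M"
  unfolding sets_Fl
  by (rule sets.sigma_sets_subset) (auto intro!: measurable_sets xi_meas)

lemma subalg: "subalgebra M (Fl t)"
  unfolding subalgebra_def using sets_Fl_M space_Fl by auto

lemma sets_Fl_mono: "t \<le> t' \<Longrightarrow> sets (Fl t) \<subseteq> sets (Fl t')"
  unfolding sets_Fl by (rule sigma_sets_mono') (fastforce intro: le_trans)

lemma subalg_mono: "t \<le> t' \<Longrightarrow> subalgebra (Fl t') (Fl t)"
  unfolding subalgebra_def using sets_Fl_mono space_Fl by auto

lemma meas_mono: "f \<in> measurable (Fl t) N \<Longrightarrow> t \<le> t' \<Longrightarrow> f \<in> measurable (Fl t') N"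
  using measurable_from_subalg subalg_mono by blast

lemma meas_M: "f \<in> measurable (Fl t) N \<Longrightarrow> f \<in> measurable M N"
  using measurable_from_subalg subalg by blast

lemma xi_Fl: "1 \<le> i \<Longrightarrow> i \<le> t \<Longrightarrow> \<xi> i \<in> borel_measurable (Fl t)"
proof (rule measurableI)
  fix A :: "'e set" assume "A \<in> sets borel" "1 \<le> i" "i \<le> t"
  then show "\<xi> i -` A \<inter> space (Fl t) \<in> sets (Fl t)"
    unfolding sets_Fl space_Fl by (intro sigma_sets.Basic) auto
qed (auto simp: space_Fl)

lemma x_meas: "x t \<in> borel_measurable (Fl t)"
proof (induction t)
  case 0
  then show ?case by simp
next
  case (Suc t)
  have p: "(\<lambda>\<omega>. (x t \<omega>, \<xi> (Suc t) \<omega>)) \<in> measurable (Fl (Suc t)) (restrict_space borel (X \<times> UNIV))"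
  proof (rule measurable_restrict_space2)
    show "(\<lambda>\<omega>. (x t \<omega>, \<xi> (Suc t) \<omega>)) \<in> space (Fl (Suc t)) \<rightarrow> X \<times> UNIV" using x_in by auto
    have "(\<lambda>\<omega>. (x t \<omega>, \<xi> (Suc t) \<omega>)) \<in> measurable (Fl (Suc t)) (borel \<Otimes>\<^sub>M borel)"
      using meas_mono[OF Suc.IH, of "Suc t"] xi_Fl[of "Suc t" "Suc t"] by (intro measurable_Pair) auto
    then show "(\<lambda>\<omega>. (x t \<omega>, \<xi> (Suc t) \<omega>)) \<in> borel_measurable (Fl (Suc t))"
      by (simp add: borel_prod)
  qed
  have gm: "(\<lambda>\<omega>. g (x t \<omega>) (\<xi> (Suc t) \<omega>)) \<in> borel_measurable (Fl (Suc t))"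
    using measurable_comp[OF p g_meas] by (simp add: o_def)
  have cc: "closest_point X \<in> borel_measurable borel"
    by (intro borel_measurable_continuous_onI continuous_on_closest_point cvX clX Xne)
  have "(\<lambda>\<omega>. x t \<omega> - \<eta> (Suc t) *\<^sub>R g (x t \<omega>) (\<xi> (Suc t) \<omega>)) \<in> borel_measurable (Fl (Suc t))"
    using meas_mono[OF Suc.IH, of "Suc t"] gm by measurable
  from measurable_comp[OF this cc] show ?case by (simp add: o_def)
qed

end


context sgd_loc begin

lemma quad_growth:
  assumes xX: "y \<in> X"
  shows "F y - F xstar \<ge> lam / 2 * (norm (y - xstar))\<^sup>2"
proof (rule field_le_mult_one_interval)
  fix z :: real assume z: "0 < z" "z < 1"
  define s where "s = 1 - z"
  have s: "0 < s" "s < 1" using z by (auto simp: s_def)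
  define h where "h = y - xstar"
  define w where "w = xstar + s *\<^sub>R h"
  have w_eq: "w = (1 - s) *\<^sub>R xstar + s *\<^sub>R y" unfolding w_def h_def by (simp add: algebra_simps)
  have wX: "w \<in> X" unfolding w_eq using cvX xstar xX s by (intro convexD) auto
  have e1: "xstar - w = (- s) *\<^sub>R h" unfolding w_def by simp
  have e2: "y - w = (1 - s) *\<^sub>R h" unfolding w_def h_def by (simp add: algebra_simps)
  have i1: "F xstar \<ge> F w + (-s) * (h \<bullet> gradF w) + lam / 2 * (s\<^sup>2 * (norm h)\<^sup>2)"
    using strong_conv[OF wX xstar] unfolding e1 by (simp add: power_mult_distrib)
  have i2: "F y \<ge> F w + (1 - s) * (h \<bullet> gradF w) + lam / 2 * ((1 - s)\<^sup>2 * (norm h)\<^sup>2)"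
    using strong_conv[OF wX xX] unfolding e2 using s by (simp add: power_mult_distrib)
  have "(1 - s) * (F w + (-s) * (h \<bullet> gradF w) + lam / 2 * (s\<^sup>2 * (norm h)\<^sup>2))
          + s * (F w + (1 - s) * (h \<bullet> gradF w) + lam / 2 * ((1 - s)\<^sup>2 * (norm h)\<^sup>2)) \<le> (1 - s) * F xstar + s * F y"
    using s by (intro add_mono mult_left_mono i1 i2) auto
  moreover have "(1 - s) * (F w + (-s) * (h \<bullet> gradF w) + lam / 2 * (s\<^sup>2 * (norm h)\<^sup>2))
          + s * (F w + (1 - s) * (h \<bullet> gradF w) + lam / 2 * ((1 - s)\<^sup>2 * (norm h)\<^sup>2)) = F w + lam / 2 * s * (1 - s) * (norm h)\<^sup>2"
    by (simp add: field_simps power2_eq_square)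
  ultimately have "(1 - s) * F xstar + s * F y \<ge> F w + lam / 2 * s * (1 - s) * (norm h)\<^sup>2" by simp
  moreover have "F w \<ge> F xstar" using xmin wX by auto
  ultimately have "s * (F y - F xstar) \<ge> s * (lam / 2 * (1 - s) * (norm h)\<^sup>2)"
    by (simp add: algebra_simps)
  then have "F y - F xstar \<ge> lam / 2 * (1 - s) * (norm h)\<^sup>2" using s by simp
  then show "z * (lam / 2 * (norm (y - xstar))\<^sup>2) \<le> F y - F xstar"
    unfolding s_def h_def by (simp add: algebra_simps)
qed

lemma grad_ineq:
  assumes yX: "y \<in> X"
  shows "(y - xstar) \<bullet> gradF y \<ge> lam * (norm (y - xstar))\<^sup>2"
proof -
  have "F xstar \<ge> F y + (xstar - y) \<bullet> gradF y + lam / 2 * (norm (xstar - y))\<^sup>2"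
    using strong_conv[OF yX xstar] .
  moreover have "(xstar - y) \<bullet> gradF y = - ((y - xstar) \<bullet> gradF y)"
    by (simp add: inner_diff_left)
  moreover have "norm (xstar - y) = norm (y - xstar)" by (rule norm_minus_commute)
  ultimately show ?thesis using quad_growth[OF yX] by simp
qed

lemma L_le_grad:
  assumes yX: "y \<in> X" and gb: "norm (gradF y) \<le> 2 * B"
  shows "lam\<^sup>2 / B\<^sup>2 * (norm (y - xstar))\<^sup>2 \<le> 4"
proof -
  have "lam * (norm (y - xstar))\<^sup>2 \<le> (y - xstar) \<bullet> gradF y" using grad_ineq[OF yX] .
  also have "\<dots> \<le> norm (y - xstar) * norm (gradF y)" by (rule norm_cauchy_schwarz)
  also have "\<dots> \<le> norm (y - xstar) * (2 * B)" by (intro mult_left_mono gb) auto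
  finally have *: "lam * (norm (y - xstar))\<^sup>2 \<le> norm (y - xstar) * (2 * B)" .
  have "lam * norm (y - xstar) \<le> 2 * B"
  proof (cases "norm (y - xstar) = 0")
    case True then show ?thesis using B_pos by simp
  next
    case False
    then have "norm (y - xstar) > 0" by simp
    with * show ?thesis by (simp add: power2_eq_square mult.commute mult_le_cancel_left_pos)
  qed
  then have "(lam * norm (y - xstar))\<^sup>2 \<le> (2 * B)\<^sup>2"
    using lam_pos by (intro power_mono) auto
  then have "lam\<^sup>2 * (norm (y - xstar))\<^sup>2 \<le> 4 * B\<^sup>2" by (simp add: power_mult_distrib)
  then show ?thesis using B_pos by (simp add: field_simps)
qed

lemma step_ineq:
  fixes \<omega> :: 'w
  assumes t: "t \<ge> 1"
  defines "y \<equiv> x (t - 1) \<omega>" and "G \<equiv> g (x (t - 1) \<omega>) (\<xi> t \<omega>)" and "a \<equiv> real t + 32"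
  shows "(norm (x t \<omega> - xstar))\<^sup>2 \<le> (1 - 2 / a) * (norm (y - xstar))\<^sup>2
           + 2 / (lam * a) * ((y - xstar) \<bullet> (gradF y - G)) + (norm G)\<^sup>2 / (lam\<^sup>2 * a\<^sup>2)"
proof -
  obtain s where ts: "t = Suc s" using t by (cases t) auto
  have yX: "y \<in> X" unfolding y_def by (rule x_in)
  have xt: "x t \<omega> = closest_point X (y - \<eta> t *\<^sub>R G)"
    unfolding ts y_def G_def by simp
  have "norm (x t \<omega> - xstar) \<le> norm ((y - \<eta> t *\<^sub>R G) - xstar)"
    using closest_point_lipschitz[OF cvX clX Xne, of "y - \<eta> t *\<^sub>R G" xstar]
    unfolding xt dist_norm closest_point_self[OF xstar] .
  then have "(norm (x t \<omega> - xstar))\<^sup>2 \<le> (norm ((y - xstar) - \<eta> t *\<^sub>R G))\<^sup>2"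
    by (simp add: algebra_simps power_mono)
  also have "\<dots> = (norm (y - xstar))\<^sup>2 - 2 * \<eta> t * ((y - xstar) \<bullet> G) + (\<eta> t)\<^sup>2 * (norm G)\<^sup>2"
    unfolding power2_norm_eq_inner by (simp add: inner_diff_left inner_diff_right inner_commute algebra_simps power2_eq_square)
  finally have A: "(norm (x t \<omega> - xstar))\<^sup>2 \<le> (norm (y - xstar))\<^sup>2 - 2 * \<eta> t * ((y - xstar) \<bullet> G) + (\<eta> t)\<^sup>2 * (norm G)\<^sup>2" .
  have BB: "(y - xstar) \<bullet> G = (y - xstar) \<bullet> gradF y - ((y - xstar) \<bullet> (gradF y - G))"
    by (simp add: inner_diff_right)
  have et: "\<eta> t = 1 / (lam * a)" unfolding a_def step ..
  have *: "(norm (x t \<omega> - xstar))\<^sup>2 \<le> (norm (y - xstar))\<^sup>2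
     - 2 * \<eta> t * ((y - xstar) \<bullet> gradF y) + 2 * \<eta> t * ((y - xstar) \<bullet> (gradF y - G))
     + (\<eta> t)\<^sup>2 * (norm G)\<^sup>2"
    using A unfolding BB by (simp add: algebra_simps)
  have apos: "a > 0" unfolding a_def by simp
  have "2 * \<eta> t * (lam * (norm (y - xstar))\<^sup>2) \<le> 2 * \<eta> t * ((y - xstar) \<bullet> gradF y)"
    using grad_ineq[OF yX] lam_pos apos unfolding et by (intro mult_left_mono) auto
  moreover have "2 * \<eta> t * (lam * (norm (y - xstar))\<^sup>2) = 2 / a * (norm (y - xstar))\<^sup>2"
    using lam_pos unfolding et by (simp add: field_simps)
  moreover have "(\<eta> t)\<^sup>2 * (norm G)\<^sup>2 = (norm G)\<^sup>2 / (lam\<^sup>2 * a\<^sup>2)"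
    unfolding et by (simp add: field_simps power_mult_distrib)
  moreover have "2 * \<eta> t * ((y - xstar) \<bullet> (gradF y - G)) = 2 / (lam * a) * ((y - xstar) \<bullet> (gradF y - G))" unfolding et by simp
  moreover have "(1 - 2 / a) * (norm (y - xstar))\<^sup>2 = (norm (y - xstar))\<^sup>2 - 2 / a * (norm (y - xstar))\<^sup>2"
    by (simp add: algebra_simps)
  ultimately show ?thesis using * by linarith
qed

end


context sgd_loc begin

lemma gx_meas: "(\<lambda>\<omega>. g (x t \<omega>) (\<xi> (Suc t) \<omega>)) \<in> borel_measurable (Fl (Suc t))"
proof -
  have p: "(\<lambda>\<omega>. (x t \<omega>, \<xi> (Suc t) \<omega>)) \<in> measurable (Fl (Suc t)) (restrict_space borel (X \<times> UNIV))"
  proof (rule measurable_restrict_space2)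
    show "(\<lambda>\<omega>. (x t \<omega>, \<xi> (Suc t) \<omega>)) \<in> space (Fl (Suc t)) \<rightarrow> X \<times> UNIV" using x_in by auto
    have "(\<lambda>\<omega>. (x t \<omega>, \<xi> (Suc t) \<omega>)) \<in> measurable (Fl (Suc t)) (borel \<Otimes>\<^sub>M borel)"
      using meas_mono[OF x_meas[of t], of "Suc t"] xi_Fl[of "Suc t" "Suc t"] by (intro measurable_Pair) auto
    then show "(\<lambda>\<omega>. (x t \<omega>, \<xi> (Suc t) \<omega>)) \<in> borel_measurable (Fl (Suc t))"
      by (simp add: borel_prod)
  qed
  show ?thesis using measurable_comp[OF p g_meas] by (simp add: o_def)
qed

definition "ell t \<omega> = lam\<^sup>2 / B\<^sup>2 * (norm (x t \<omega> - xstar))\<^sup>2"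
definition "Gt t \<omega> = g (x (t - 1) \<omega>) (\<xi> t \<omega>)"
definition "ce t b \<omega> = real_cond_exp M (Fl (t - 1)) (\<lambda>\<omega>. Gt t \<omega> \<bullet> b) \<omega>"
definition "dd t \<omega> = lam / B\<^sup>2 * (\<Sum>b\<in>Basis. ((x (t - 1) \<omega> - xstar) \<bullet> b) * (ce t b \<omega> - Gt t \<omega> \<bullet> b))"

lemma Gt_meas: "t \<ge> 1 \<Longrightarrow> Gt t \<in> borel_measurable (Fl t)"
  using gx_meas[of "t - 1"] unfolding Gt_def by simp

lemma ell_meas: "ell t \<in> borel_measurable (Fl t)"
  unfolding ell_def using x_meas[of t] by measurable

lemma ell_nn: "ell t \<omega> \<ge> 0" unfolding ell_def by simp

definition "Rb = (SOME R. \<forall>y\<in>X. norm (y - xstar) \<le> R)"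

lemma Rb: "y \<in> X \<Longrightarrow> norm (y - xstar) \<le> Rb"
proof -
  have "bounded X" using cX compact_imp_bounded by auto
  then obtain R where "\<forall>y\<in>X. norm y \<le> R" unfolding bounded_iff by auto
  then have "\<forall>y\<in>X. norm (y - xstar) \<le> R + norm xstar"
    using norm_triangle_ineq4 by (smt (verit))
  then have "\<exists>R. \<forall>y\<in>X. norm (y - xstar) \<le> R" by blast
  from someI_ex[OF this] show "y \<in> X \<Longrightarrow> norm (y - xstar) \<le> Rb" unfolding Rb_def by blast
qed

lemma Rb_nn: "Rb \<ge> 0" using Rb[OF xstar] by simp

definition "Kl = lam\<^sup>2 / B\<^sup>2 * Rb\<^sup>2"

lemma ell_le: "ell t \<omega> \<le> Kl"
  unfolding ell_def Kl_def using Rb[OF x_in[of t \<omega>]]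
  by (intro mult_left_mono power_mono) auto

lemma ce_meas: "ce t b \<in> borel_measurable (Fl (t - 1))"
  unfolding ce_def by (rule borel_measurable_cond_exp)

lemma dd_meas: "t \<ge> 1 \<Longrightarrow> dd t \<in> borel_measurable (Fl t)"
proof -
  assume t: "t \<ge> 1"
  have "ce t b \<in> borel_measurable (Fl t)" for b using meas_mono[OF ce_meas, of t t] by simp
  moreover have "x (t - 1) \<in> borel_measurable (Fl t)" using meas_mono[OF x_meas, of "t-1" t] by simp
  moreover note Gt_meas[OF t]
  ultimately show ?thesis unfolding dd_def by measurable
qed

lemma AE_unb: "AE \<omega> in M. \<forall>t. t \<ge> 1 \<longrightarrow> (\<forall>b\<in>Basis. ce t b \<omega> = gradF (x (t - 1) \<omega>) \<bullet> b)"
proof -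
  have "AE \<omega> in M. \<forall>b\<in>Basis. ce t b \<omega> = gradF (x (t - 1) \<omega>) \<bullet> b" if "t \<ge> 1" for t
    by (rule AE_ball_countable') (use unbiased[OF that] in \<open>auto simp: ce_def Gt_def countable_finite\<close>)
  then show ?thesis unfolding AE_all_countable[symmetric] by (auto simp: AE_all_countable)
qed

lemma AE_props: "AE \<omega> in M. \<forall>t. t \<ge> 1 \<longrightarrow>
   ell t \<omega> \<le> (1 - 2 / (real t + 32)) * ell (t - 1) \<omega> + 2 / (real t + 32) * dd t \<omega> + 1 / (real t + 32)\<^sup>2
   \<and> (dd t \<omega>)\<^sup>2 \<le> ell (t - 1) \<omega> \<and> ell (t - 1) \<omega> \<le> 4 \<and> norm (Gt t \<omega>) \<le> B"
  using AE_unb bounded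
proof eventually_elim
  case (elim \<omega>)
  show ?case
  proof (intro allI impI)
    fix t :: nat assume t: "t \<ge> 1"
    define y where "y = x (t - 1) \<omega>"
    define G where "G = Gt t \<omega>"
    define a where "a = real t + 32"
    have apos: "a > 0" unfolding a_def by simp
    have b1: "norm (G - gradF y) \<le> B" and b2: "norm G \<le> B"
      using elim(2) t unfolding G_def Gt_def y_def by auto
    have yX: "y \<in> X" unfolding y_def by (rule x_in)
    have dd_eq: "dd t \<omega> = lam / B\<^sup>2 * ((y - xstar) \<bullet> (gradF y - G))"
    proof -
      have "(\<Sum>b\<in>Basis. ((y - xstar) \<bullet> b) * (ce t b \<omega> - Gt t \<omega> \<bullet> b))
          = (\<Sum>b\<in>Basis. ((y - xstar) \<bullet> b) * ((gradF y - G) \<bullet> b))"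
        using elim(1) t by (intro sum.cong) (auto simp: y_def G_def inner_diff_left)
      also have "\<dots> = (y - xstar) \<bullet> (gradF y - G)" by (rule euclidean_inner[symmetric])
      finally show ?thesis unfolding dd_def y_def by simp
    qed
    have st: "(norm (x t \<omega> - xstar))\<^sup>2 \<le> (1 - 2 / a) * (norm (y - xstar))\<^sup>2
           + 2 / (lam * a) * ((y - xstar) \<bullet> (gradF y - G)) + (norm G)\<^sup>2 / (lam\<^sup>2 * a\<^sup>2)"
      using step_ineq[OF t, of \<omega>] unfolding y_def G_def Gt_def a_def .
    have c: "lam\<^sup>2 / B\<^sup>2 > 0" using lam_pos B_pos by simp
    have "ell t \<omega> \<le> lam\<^sup>2 / B\<^sup>2 * ((1 - 2 / a) * (norm (y - xstar))\<^sup>2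
           + 2 / (lam * a) * ((y - xstar) \<bullet> (gradF y - G)) + (norm G)\<^sup>2 / (lam\<^sup>2 * a\<^sup>2))"
      unfolding ell_def using st c by (intro mult_left_mono) auto
    also have "\<dots> = (1 - 2 / a) * ell (t - 1) \<omega> + 2 / a * dd t \<omega> + (norm G)\<^sup>2 / B\<^sup>2 / a\<^sup>2"
      unfolding ell_def dd_eq y_def using lam_pos B_pos apos
      by (simp add: field_simps power2_eq_square)
    also have "(norm G)\<^sup>2 / B\<^sup>2 / a\<^sup>2 \<le> 1 / a\<^sup>2"
    proof -
      have "(norm G)\<^sup>2 \<le> B\<^sup>2" using b2 by (intro power_mono) auto
      then have "(norm G)\<^sup>2 / B\<^sup>2 \<le> 1" using B_pos by simp
      then show ?thesis using apos by (intro divide_right_mono) auto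
    qed
    finally have s1: "ell t \<omega> \<le> (1 - 2 / a) * ell (t - 1) \<omega> + 2 / a * dd t \<omega> + 1 / a\<^sup>2" by simp
    have "\<bar>(y - xstar) \<bullet> (gradF y - G)\<bar> \<le> norm (y - xstar) * norm (gradF y - G)"
      by (rule Cauchy_Schwarz_ineq2)
    also have "\<dots> \<le> norm (y - xstar) * B" using b1 by (intro mult_left_mono) (auto simp: norm_minus_commute)
    finally have "((y - xstar) \<bullet> (gradF y - G))\<^sup>2 \<le> (norm (y - xstar) * B)\<^sup>2"
      by (metis abs_ge_zero power2_abs power_mono)
    then have "(lam / B\<^sup>2)\<^sup>2 * ((y - xstar) \<bullet> (gradF y - G))\<^sup>2 \<le> (lam / B\<^sup>2)\<^sup>2 * (norm (y - xstar) * B)\<^sup>2"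
      by (intro mult_left_mono) auto
    also have "\<dots> = ell (t - 1) \<omega>" unfolding ell_def y_def using B_pos
      by (simp add: field_simps power2_eq_square)
    finally have s2: "(dd t \<omega>)\<^sup>2 \<le> ell (t - 1) \<omega>" unfolding dd_eq by (simp only: power_mult_distrib)
    have "norm (gradF y) \<le> norm (G - gradF y) + norm G"
      by (metis norm_minus_commute norm_triangle_sub add.commute)
    then have "norm (gradF y) \<le> 2 * B" using b1 b2 by simp
    from L_le_grad[OF yX this] have s3: "ell (t - 1) \<omega> \<le> 4" unfolding ell_def y_def .
    show "ell t \<omega> \<le> (1 - 2 / (real t + 32)) * ell (t - 1) \<omega> + 2 / (real t + 32) * dd t \<omega> + 1 / (real t + 32)\<^sup>2
      \<and> (dd t \<omega>)\<^sup>2 \<le> ell (t - 1) \<omega> \<and> ell (t - 1) \<omega> \<le> 4 \<and> norm (Gt t \<omega>) \<le> B"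
      using s1 s2 s3 b2 unfolding a_def G_def by simp
  qed
qed

end


context sgd_loc begin

lemma mart:
  assumes t: "t \<ge> 1" and Wm: "W \<in> borel_measurable (Fl (t - 1))" and Wb: "\<And>\<omega>. \<bar>W \<omega>\<bar> \<le> K"
  shows "integrable M (\<lambda>\<omega>. W \<omega> * dd t \<omega>)" "(\<integral>\<omega>. W \<omega> * dd t \<omega> \<partial>M) = 0"
proof -
  interpret prob_space M by (rule PS)
  interpret S: finite_measure_subalgebra M "Fl (t - 1)"
    by (simp add: finite_measure_subalgebra_def finite_measure_subalgebra_axioms_def subalg finite_measure_axioms)
  have K: "K \<ge> 0" using Wb[of undefined] by linarith
  define f where "f b \<omega> = W \<omega> * ((x (t - 1) \<omega> - xstar) \<bullet> b)" for b \<omega>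
  define h where "h b \<omega> = Gt t \<omega> \<bullet> b" for b \<omega>
  have fm: "f b \<in> borel_measurable (Fl (t - 1))" for b
    unfolding f_def using Wm x_meas[of "t - 1"] by measurable
  have hm: "h b \<in> borel_measurable M" for b
    unfolding h_def using meas_M[OF Gt_meas[OF t]] by measurable
  have fb: "\<bar>f b \<omega>\<bar> \<le> K * Rb" if "b \<in> Basis" for b \<omega>
  proof -
    have "\<bar>(x (t - 1) \<omega> - xstar) \<bullet> b\<bar> \<le> Rb"
      using Basis_le_norm[OF that] Rb[OF x_in] order_trans by blast
    then show ?thesis unfolding f_def abs_mult using Wb K by (intro mult_mono) auto
  qed
  have AEh: "AE \<omega> in M. \<bar>h b \<omega>\<bar> \<le> B" if "b \<in> Basis" for b
    using AE_props
  proof eventually_elim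
    case (elim \<omega>)
    then have "norm (Gt t \<omega>) \<le> B" using t by blast
    then show ?case unfolding h_def using Basis_le_norm[OF that] order_trans by blast
  qed
  have int_fh: "integrable M (\<lambda>\<omega>. f b \<omega> * h b \<omega>)" if bB: "b \<in> Basis" for b
  proof (rule integrable_const_bound[where B = "K * Rb * B"])
    show "AE \<omega> in M. norm (f b \<omega> * h b \<omega>) \<le> K * Rb * B"
      using AEh[OF bB]
    proof eventually_elim
      case (elim \<omega>)
      show ?case using fb[OF bB, of \<omega>] elim B_pos by (auto simp: abs_mult intro!: mult_mono)
    qed
    show "(\<lambda>\<omega>. f b \<omega> * h b \<omega>) \<in> borel_measurable M"
      using meas_M[OF fm] hm by measurable
  qed
  have ce_eq: "ce t b = real_cond_exp M (Fl (t - 1)) (h b)" for b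
    unfolding ce_def h_def by (rule ext) simp
  have I1: "integrable M (\<lambda>\<omega>. f b \<omega> * ce t b \<omega>)" if "b \<in> Basis" for b
    unfolding ce_eq by (rule S.real_cond_exp_intg(1)[OF int_fh[OF that] fm hm])
  have I2: "(\<integral>\<omega>. f b \<omega> * ce t b \<omega> \<partial>M) = (\<integral>\<omega>. f b \<omega> * h b \<omega> \<partial>M)" if "b \<in> Basis" for b
    unfolding ce_eq by (rule S.real_cond_exp_intg(2)[OF int_fh[OF that] fm hm])
  have eq: "W \<omega> * dd t \<omega> = lam / B\<^sup>2 * (\<Sum>b\<in>Basis. f b \<omega> * ce t b \<omega> - f b \<omega> * h b \<omega>)" for \<omega>
    unfolding dd_def f_def h_def by (simp add: sum_distrib_left algebra_simps)
  have intsum: "integrable M (\<lambda>\<omega>. \<Sum>b\<in>Basis. f b \<omega> * ce t b \<omega> - f b \<omega> * h b \<omega>)"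
    by (intro Bochner_Integration.integrable_sum Bochner_Integration.integrable_diff) (auto intro: I1 int_fh)
  show "integrable M (\<lambda>\<omega>. W \<omega> * dd t \<omega>)"
    unfolding eq using intsum by (intro integrable_mult_right)
  have "(\<integral>\<omega>. W \<omega> * dd t \<omega> \<partial>M) = lam / B\<^sup>2 * (\<integral>\<omega>. (\<Sum>b\<in>Basis. f b \<omega> * ce t b \<omega> - f b \<omega> * h b \<omega>) \<partial>M)"
    unfolding eq by simp
  also have "(\<integral>\<omega>. (\<Sum>b\<in>Basis. f b \<omega> * ce t b \<omega> - f b \<omega> * h b \<omega>) \<partial>M)
     = (\<Sum>b\<in>Basis. (\<integral>\<omega>. f b \<omega> * ce t b \<omega> - f b \<omega> * h b \<omega> \<partial>M))"
    by (intro Bochner_Integration.integral_sum Bochner_Integration.integrable_diff) (auto intro: I1 int_fh)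
  also have "\<dots> = 0"
    using I1 I2 int_fh by (intro sum.neutral ballI) simp
  finally show "(\<integral>\<omega>. W \<omega> * dd t \<omega> \<partial>M) = 0" by simp
qed

end



lemma exp_quad:
  fixes y :: real assumes "\<bar>y\<bar> \<le> 1" shows "exp y \<le> 1 + y + y\<^sup>2"
proof (cases "y \<ge> 0")
  case True then show ?thesis using exp_bound assms by auto
next
  case False
  define c where "c = - y"
  have c: "0 < c" "c \<le> 1" using False assms by (auto simp: c_def)
  have "1 + c \<le> exp c" by (rule exp_ge_add_one_self)
  have ey: "exp y = 1 / exp c" unfolding c_def by (simp add: exp_minus inverse_eq_divide)
  have "exp y \<le> 1 / (1 + c)" unfolding ey
    by (rule divide_left_mono) (use \<open>1 + c \<le> exp c\<close> c in auto)
  also have "\<dots> \<le> 1 - c + c\<^sup>2"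
  proof -
    have "1 \<le> (1 + c) * (1 - c + c\<^sup>2)" using c by (simp add: algebra_simps power2_eq_square power3_eq_cube)
    then show ?thesis using c by (simp add: field_simps)
  qed
  finally show ?thesis unfolding c_def by simp
qed

definition "aa s = real s + 32"
definition "th (A::real) s = (aa s)\<^sup>2 / (8 * (aa s + A))"
definition "qq (A::real) s = 1 / (8 * (aa s + A))"
definition "bb (A::real) s = aa s / (8 * (aa s + A))"

lemma coef_ineq:
  fixes a A :: real assumes a: "a \<ge> 4" and A: "A \<ge> 0"
  shows "a / (8 * (a + A)) * (a - 2) + 4 * (a / (8 * (a + A)))\<^sup>2 \<le> (a - 1)\<^sup>2 / (8 * (a - 1 + A))"
proof -
  define S where "S = a + A"
  have S: "S \<ge> 4" using a A by (simp add: S_def)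
  have num: "0 \<le> 2 * S\<^sup>2 + S * (a * (a - 4)) + a\<^sup>2" using S a by (intro add_nonneg_nonneg mult_nonneg_nonneg) auto
  have "(a - 1)\<^sup>2 / (8 * (S - 1)) - (a / (8 * S) * (a - 2) + 4 * (a / (8 * S))\<^sup>2)
      = (2 * S\<^sup>2 + S * (a * (a - 4)) + a\<^sup>2) / (16 * S\<^sup>2 * (S - 1))"
    using S by (simp add: field_simps power2_eq_square)
  also have "\<dots> \<ge> 0" using num S by (intro divide_nonneg_pos) auto
  finally show ?thesis unfolding S_def by (simp add: algebra_simps)
qed

lemma bdd_int:
  fixes f :: "'a \<Rightarrow> real" and C :: real
  assumes "prob_space M" "f \<in> borel_measurable M" "\<And>\<omega>. \<bar>f \<omega>\<bar> \<le> C"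
  shows "integrable M f"
proof -
  interpret prob_space M by fact
  show ?thesis by (rule integrable_const_bound[where B = C]) (use assms in auto)
qed

context sgd_loc begin

definition "Ysm A s \<omega> = exp (th A s * ell s \<omega> - (\<Sum>r\<in>{1..s}. qq A r))"

lemma Ysm_meas: "Ysm A s \<in> borel_measurable (Fl s)"
  unfolding Ysm_def using ell_meas[of s] by measurable

lemma Ysm_int: assumes "A \<ge> 0" shows "integrable M (Ysm A s)"
proof (rule bdd_int[OF PS meas_M[OF Ysm_meas]])
  fix \<omega>
  have q: "(\<Sum>r\<in>{1..s}. qq A r) \<ge> 0" using assms by (intro sum_nonneg) (auto simp: qq_def aa_def)
  have "th A s \<ge> 0" using assms by (auto simp: th_def aa_def)
  then have "th A s * ell s \<omega> \<le> th A s * Kl" using ell_le by (intro mult_left_mono) auto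
  then show "\<bar>Ysm A s \<omega>\<bar> \<le> exp (th A s * Kl)" unfolding Ysm_def using q by simp
qed

lemma supermart:
  assumes A: "A \<ge> 0" and s: "s \<ge> 1" and N: "N \<in> sets (Fl (s - 1))"
  shows "(\<integral>\<omega>. Ysm A s \<omega> * indicator N \<omega> \<partial>M) \<le> (\<integral>\<omega>. Ysm A (s - 1) \<omega> * indicator N \<omega> \<partial>M)"
proof -
  interpret prob_space M by (rule PS)
  define a where "a = aa s"
  define b where "b = bb A s"
  define Sm where "Sm = (\<Sum>r\<in>{1..s-1}. qq A r)"
  define Z where "Z \<omega> = exp (b * (a - 2) * ell (s - 1) \<omega> - Sm) * indicator N \<omega>" for \<omega>
  have a33: "a \<ge> 33" using s unfolding a_def aa_def by simp
  have b0: "b \<ge> 0" and b8: "b \<le> 1 / 8" using A a33 unfolding b_def bb_def a_def[symmetric]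
    by (auto simp: field_simps)
  have Sm0: "Sm \<ge> 0" unfolding Sm_def using A by (intro sum_nonneg) (auto simp: qq_def aa_def)
  have NM: "N \<in> sets M" using N sets_Fl_M by auto
  have sumS: "(\<Sum>r\<in>{1..s}. qq A r) = Sm + qq A s"
  proof -
    have "{1..s} = insert s {1..s-1}" using s by auto
    then show ?thesis unfolding Sm_def using s by (simp add: add.commute)
  qed
  have th_eq: "th A s = a * b" unfolding th_def b_def bb_def a_def by (simp add: power2_eq_square)
  have thq: "th A s / a\<^sup>2 = qq A s"
  proof -
    have "a + A > 0" "a > 0" using a33 A by auto
    then show ?thesis unfolding th_def qq_def a_def[symmetric] by (simp add: mult.commute[of _ "a^2"])
  qed
  have th0: "th A s \<ge> 0" unfolding th_eq using a33 b0 by simp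
  have Zm: "Z \<in> borel_measurable (Fl (s - 1))" unfolding Z_def using ell_meas[of "s - 1"] N by measurable
  have Z0: "Z \<omega> \<ge> 0" for \<omega> unfolding Z_def by simp
  have Zb: "Z \<omega> \<le> exp (b * a * Kl)" for \<omega>
  proof -
    have "b * (a - 2) * ell (s - 1) \<omega> \<le> b * a * Kl"
      using b0 a33 ell_le ell_nn by (intro mult_mono) auto
    then have "exp (b * (a - 2) * ell (s - 1) \<omega> - Sm) \<le> exp (b * a * Kl)" using Sm0 by simp
    then show ?thesis unfolding Z_def by (simp split: split_indicator)
  qed
  have pw: "AE \<omega> in M. Ysm A s \<omega> * indicator N \<omega> \<le> Z \<omega> * (1 + 4 * b\<^sup>2 * ell (s - 1) \<omega>) + (2 * b * Z \<omega>) * dd s \<omega>"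
    using AE_props
  proof eventually_elim
    case (elim \<omega>)
    define l where "l = ell (s - 1) \<omega>"
    define d where "d = dd s \<omega>"
    have e1: "ell s \<omega> \<le> (1 - 2 / a) * l + 2 / a * d + 1 / a\<^sup>2" and e2: "d\<^sup>2 \<le> l" and e3: "l \<le> 4"
      using elim s unfolding a_def aa_def l_def d_def by auto
    have "th A s * ell s \<omega> \<le> th A s * ((1 - 2 / a) * l + 2 / a * d + 1 / a\<^sup>2)"
      using e1 th0 by (intro mult_left_mono) auto
    also have "\<dots> = b * (a - 2) * l + 2 * b * d + qq A s"
      unfolding thq[symmetric] th_eq using a33 by (simp add: field_simps power2_eq_square)
    finally have "th A s * ell s \<omega> - (\<Sum>r\<in>{1..s}. qq A r) \<le> (b * (a - 2) * l - Sm) + 2 * b * d"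
      unfolding sumS by simp
    then have Yle: "Ysm A s \<omega> \<le> exp (b * (a - 2) * l - Sm) * exp (2 * b * d)"
      unfolding Ysm_def by (simp add: exp_add[symmetric])
    have sq: "(2 * b * d)\<^sup>2 \<le> 4 * b\<^sup>2 * l"
      using e2 by (simp add: power_mult_distrib mult_left_mono)
    have "b\<^sup>2 \<le> (1/8)\<^sup>2" using b0 b8 by (intro power_mono) auto
    then have b64: "b\<^sup>2 \<le> 1/64" by (simp add: power2_eq_square)
    have "b\<^sup>2 * l \<le> 1/64 * 4"
      using b64 e3 ell_nn[of "s - 1" \<omega>] unfolding l_def[symmetric]
      by (intro mult_mono) auto
    then have "4 * b\<^sup>2 * l \<le> 1" by linarith
    with sq have "(2 * b * d)\<^sup>2 \<le> 1" by linarith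
    then have "\<bar>2 * b * d\<bar> \<le> 1" by (simp add: abs_square_le_1)
    from exp_quad[OF this] sq have "exp (2 * b * d) \<le> 1 + 4 * b\<^sup>2 * l + 2 * b * d" by simp
    then have "exp (b * (a - 2) * l - Sm) * exp (2 * b * d) \<le> exp (b * (a - 2) * l - Sm) * (1 + 4 * b\<^sup>2 * l + 2 * b * d)"
      by (intro mult_left_mono) auto
    with Yle have "Ysm A s \<omega> \<le> exp (b * (a - 2) * l - Sm) * (1 + 4 * b\<^sup>2 * l) + 2 * b * exp (b * (a - 2) * l - Sm) * d"
      by (simp add: algebra_simps)
    then show ?case unfolding Z_def l_def[symmetric] d_def[symmetric]
      by (auto split: split_indicator simp: algebra_simps)
  qed
  have W: "integrable M (\<lambda>\<omega>. (2 * b * Z \<omega>) * dd s \<omega>)" "(\<integral>\<omega>. (2 * b * Z \<omega>) * dd s \<omega> \<partial>M) = 0"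
  proof -
    have "\<bar>2 * b * Z \<omega>\<bar> \<le> 2 * b * exp (b * a * Kl)" for \<omega>
      using Zb[of \<omega>] Z0[of \<omega>] b0 by (simp add: abs_mult mult_left_mono)
    moreover have "(\<lambda>\<omega>. 2 * b * Z \<omega>) \<in> borel_measurable (Fl (s - 1))" using Zm by measurable
    ultimately show "integrable M (\<lambda>\<omega>. (2 * b * Z \<omega>) * dd s \<omega>)" "(\<integral>\<omega>. (2 * b * Z \<omega>) * dd s \<omega> \<partial>M) = 0"
      using mart[OF s] by blast+
  qed
  have ZI: "integrable M (\<lambda>\<omega>. Z \<omega> * (1 + 4 * b\<^sup>2 * ell (s - 1) \<omega>))"
  proof (rule bdd_int[OF PS])
    show "(\<lambda>\<omega>. Z \<omega> * (1 + 4 * b\<^sup>2 * ell (s - 1) \<omega>)) \<in> borel_measurable M"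
      using meas_M[OF Zm] meas_M[OF ell_meas[of "s - 1"]] by measurable
    fix \<omega>
    show "\<bar>Z \<omega> * (1 + 4 * b\<^sup>2 * ell (s - 1) \<omega>)\<bar> \<le> exp (b * a * Kl) * (1 + 4 * b\<^sup>2 * Kl)"
      using Zb[of \<omega>] Z0[of \<omega>] ell_le[of "s - 1" \<omega>] ell_nn[of "s - 1" \<omega>]
      by (auto simp: abs_mult intro!: mult_mono)
  qed
  have "(\<integral>\<omega>. Ysm A s \<omega> * indicator N \<omega> \<partial>M)
      \<le> (\<integral>\<omega>. Z \<omega> * (1 + 4 * b\<^sup>2 * ell (s - 1) \<omega>) + (2 * b * Z \<omega>) * dd s \<omega> \<partial>M)"
    using pw by (intro integral_mono_AE Bochner_Integration.integrable_add ZI W(1)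
        integrable_real_mult_indicator NM Ysm_int A)
  also have "\<dots> = (\<integral>\<omega>. Z \<omega> * (1 + 4 * b\<^sup>2 * ell (s - 1) \<omega>) \<partial>M)"
    using ZI W by simp
  also have "\<dots> \<le> (\<integral>\<omega>. Ysm A (s - 1) \<omega> * indicator N \<omega> \<partial>M)"
  proof (intro integral_mono ZI integrable_real_mult_indicator NM Ysm_int A)
    fix \<omega>
    define l where "l = ell (s - 1) \<omega>"
    have l0: "l \<ge> 0" unfolding l_def by (rule ell_nn)
    have c: "b * (a - 2) + 4 * b\<^sup>2 \<le> th A (s - 1)"
    proof -
      have "aa (s - 1) = a - 1" using s unfolding a_def aa_def by auto
      then show ?thesis using coef_ineq[of a A] a33 A unfolding b_def bb_def th_def a_def by simp
    qed
    have "Z \<omega> * (1 + 4 * b\<^sup>2 * l) \<le> exp (b * (a - 2) * l - Sm) * exp (4 * b\<^sup>2 * l) * indicator N \<omega>"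
      unfolding Z_def l_def[symmetric]
      using exp_ge_add_one_self[of "4 * b\<^sup>2 * l"] by (auto split: split_indicator)
    also have "\<dots> = exp ((b * (a - 2) + 4 * b\<^sup>2) * l - Sm) * indicator N \<omega>"
      by (simp add: exp_add[symmetric] algebra_simps)
    also have "\<dots> \<le> exp (th A (s - 1) * l - Sm) * indicator N \<omega>"
      using c l0 by (auto split: split_indicator intro!: mult_right_mono)
    also have "\<dots> = Ysm A (s - 1) \<omega> * indicator N \<omega>"
      unfolding Ysm_def Sm_def l_def by simp
    finally show "Z \<omega> * (1 + 4 * b\<^sup>2 * ell (s - 1) \<omega>) \<le> Ysm A (s - 1) \<omega> * indicator N \<omega>"
      unfolding l_def .
  qed
  finally show ?thesis .
qed

end



lemma ln2_ge: "ln (2::real) \<ge> 1/2"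
  using exp_half_le2 by (subst ln_ge_iff) auto

lemma lnt9: "ln (real t + 9) \<ge> 2"
proof -
  have "exp (2::real) = exp 1 * exp 1" by (simp flip: exp_add)
  also have "\<dots> \<le> 3 * 3" using exp_le by (intro mult_mono) auto
  finally have "exp (2::real) \<le> real t + 9" by simp
  then show ?thesis by (subst ln_ge_iff) auto
qed

lemma lnln_ge: "ln (ln (real t + 9)) \<ge> 1/2"
proof -
  have "1/2 \<le> ln (2::real)" by (rule ln2_ge)
  also have "\<dots> \<le> ln (ln (real t + 9))" using lnt9[of t] by (subst ln_le_cancel_iff) auto
  finally show ?thesis .
qed

lemma numeric_k:
  fixes k t :: nat
  assumes kt: "2 ^ k < real t + 9"
  shows "ln ((real k + 1) * (real k + 2)) \<le> 4 + 2 * ln (ln (real t + 9))"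
proof -
  define L where "L = ln (real t + 9)"
  have L2: "L \<ge> 2" unfolding L_def by (rule lnt9)
  have "real k * ln 2 = ln (2 ^ k)" by (simp add: ln_realpow)
  also have "\<dots> < L" unfolding L_def using kt by (subst ln_less_cancel_iff) auto
  finally have "real k * ln 2 < L" .
  moreover have "real k * (1/2) \<le> real k * ln 2" using ln2_ge by (intro mult_left_mono) auto
  ultimately have k: "real k < 2 * L" by simp
  have k2: "real k + 2 \<le> 3 * L" using k L2 by simp
  have "(real k + 1) * (real k + 2) \<le> (real k + 2) * (real k + 2)" by (intro mult_right_mono) auto
  also have "\<dots> \<le> (3 * L) * (3 * L)" using k2 by (intro mult_mono) auto
  finally have p: "(real k + 1) * (real k + 2) \<le> 3 * 3 * (L * L)" by (simp add: algebra_simps)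
  have "ln ((real k + 1) * (real k + 2)) \<le> ln (3 * 3 * (L * L))"
    using p L2 by (subst ln_le_cancel_iff) auto
  also have "\<dots> = ln 9 + ln L + ln L" using L2 by (simp add: ln_mult)
  also have "ln (9::real) \<le> 4"
  proof -
    have "3 \<le> exp (2::real)" using exp_ge_add_one_self[of 2] by simp
    then have "3 * 3 \<le> exp (2::real) * exp 2" by (intro mult_mono) auto
    then have "9 \<le> exp (4::real)" by (simp flip: exp_add)
    then have "ln (9::real) \<le> ln (exp 4)" by (subst ln_le_cancel_iff) auto
    then show ?thesis by simp
  qed
  finally show ?thesis unfolding L_def by simp
qed



context sgd_loc begin

definition "Bad k dl = {\<omega> \<in> space M. \<exists>s \<le> 33 * 2 ^ k - 32. Ysm (33 * 2 ^ k) s \<omega> \<ge> exp 16 / dl}"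

lemma ell0: "ell 0 \<omega> \<le> 4"
proof -
  interpret prob_space M by (rule PS)
  have "AE \<omega>' in M. ell 0 \<omega> \<le> 4"
    using AE_props
  proof eventually_elim
    case (elim \<omega>')
    then have "ell 0 \<omega>' \<le> 4" by (metis diff_self_eq_0 le_refl One_nat_def)
    moreover have "ell 0 \<omega>' = ell 0 \<omega>" unfolding ell_def by simp
    ultimately show ?case by simp
  qed
  then show ?thesis by simp
qed

lemma Bad_sets: "Bad k dl \<in> sets M"
proof -
  have [measurable]: "Ysm A s \<in> borel_measurable M" for A s by (rule meas_M[OF Ysm_meas])
  show ?thesis unfolding Bad_def by measurable
qed

lemma epoch:
  assumes dl: "dl > 0"
  shows "measure M (Bad k dl) \<le> dl"
proof -
  define A :: real where "A = 33 * 2 ^ k"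
  define c where "c = exp 16 / dl"
  have A0: "A \<ge> 0" unfolding A_def by simp
  have c0: "c > 0" unfolding c_def using dl by simp
  have "c * measure M {\<omega> \<in> space M. \<exists>s\<le>33 * 2 ^ k - 32. Ysm A s \<omega> \<ge> c} \<le> (\<integral>\<omega>. Ysm A 0 \<omega> \<partial>M)"
  proof (rule ville[OF PS c0])
    show "Ysm A s \<in> borel_measurable M" for s by (rule meas_M[OF Ysm_meas])
    show "integrable M (Ysm A s)" for s by (rule Ysm_int[OF A0])
    show "Ysm A s \<omega> \<ge> 0" for s \<omega> unfolding Ysm_def by simp
    show "sets (Fl s) \<subseteq> sets M" for s by (rule sets_Fl_M)
    show "sets (Fl s) \<subseteq> sets (Fl (Suc s))" for s by (rule sets_Fl_mono) simp
    show "P \<inter> Q \<in> sets (Fl s)" if "P \<in> sets (Fl s)" "Q \<in> sets (Fl s)" for s P Q using that by auto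
    show "{\<omega> \<in> space M. Ysm A s \<omega> < c} \<in> sets (Fl s)" for s
    proof -
      have "{\<omega> \<in> space (Fl s). Ysm A s \<omega> < c} \<in> sets (Fl s)" using Ysm_meas[of A s] by measurable
      then show ?thesis by (simp add: space_Fl)
    qed
    show "(\<integral>\<omega>. Ysm A (Suc s) \<omega> * indicator N \<omega> \<partial>M) \<le> (\<integral>\<omega>. Ysm A s \<omega> * indicator N \<omega> \<partial>M)"
      if "N \<in> sets (Fl s)" for s N
      using supermart[OF A0, of "Suc s" N] that by simp
  qed
  also have "(\<integral>\<omega>. Ysm A 0 \<omega> \<partial>M) \<le> exp 16"
  proof -
    interpret prob_space M by (rule PS)
    have "th A 0 \<le> 4" unfolding th_def aa_def using A0 by (simp add: field_simps)
    moreover have "th A 0 \<ge> 0" unfolding th_def aa_def using A0 by simp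
    ultimately have "th A 0 * ell 0 \<omega> \<le> 4 * 4" for \<omega> using ell0[of \<omega>] ell_nn[of 0 \<omega>]
      by (intro mult_mono) auto
    then have "Ysm A 0 \<omega> \<le> exp 16" for \<omega> unfolding Ysm_def by simp
    then have "(\<integral>\<omega>. Ysm A 0 \<omega> \<partial>M) \<le> (\<integral>\<omega>. exp 16 \<partial>M)"
      by (intro integral_mono Ysm_int A0) auto
    then show ?thesis by (simp add: prob_space)
  qed
  finally have "c * measure M (Bad k dl) \<le> exp 16" unfolding Bad_def A_def c_def by simp
  then show ?thesis unfolding c_def using dl by (simp add: field_simps)
qed

end


context sgd_loc begin

lemma good_point:
  assumes d: "0 < \<delta>" "\<delta> < 1" and t: "t \<ge> 1"
    and nb: "\<And>k. \<omega> \<notin> Bad k (\<delta> / ((real k + 1) * (real k + 2)))" and om: "\<omega> \<in> space M"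
  shows "(norm (x t \<omega> - xstar))\<^sup>2
             \<le> 1008 * (B\<^sup>2 / lam\<^sup>2) * ((ln (1 / \<delta>) + 2 * ln (ln (real t + 9))) / (real t + 32))"
proof -
  have ex: "\<exists>k::nat. real t + 32 \<le> 33 * 2 ^ k"
  proof -
    have "real t < 2 ^ t" using less_exp[of t] by (metis of_nat_less_iff of_nat_numeral of_nat_power)
    then show ?thesis using one_le_power[of "2::real" t] by (intro exI[of _ t]) linarith
  qed
  define k where "k = (LEAST k::nat. real t + 32 \<le> 33 * 2 ^ k)"
  have hk: "real t + 32 \<le> 33 * 2 ^ k" unfolding k_def by (rule LeastI_ex[OF ex])
  define A :: real where "A = 33 * 2 ^ k"
  define a where "a = real t + 32"
  have hA1: "a \<le> A" using hk unfolding a_def A_def .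
  have hA2: "A < 2 * a"
  proof (cases k)
    case 0 then show ?thesis unfolding A_def a_def by simp
  next
    case (Suc j)
    have "j < k" using Suc by simp
    then have "\<not> (real t + 32 \<le> 33 * 2 ^ j)" unfolding k_def by (rule not_less_Least)
    then show ?thesis unfolding A_def a_def Suc by simp
  qed
  have a33: "a \<ge> 33" using t unfolding a_def by simp
  have pk: "2 ^ k < real t + 9" using hA2 t unfolding A_def a_def by simp
  have tT: "t \<le> 33 * 2 ^ k - 32"
  proof -
    have "real (t + 32) \<le> real (33 * 2 ^ k)" using hk by simp
    then have "t + 32 \<le> 33 * 2 ^ k" by (simp only: of_nat_le_iff)
    then show ?thesis by simp
  qed
  define dk where "dk = \<delta> / ((real k + 1) * (real k + 2))"
  have dk0: "dk > 0" unfolding dk_def using d by simp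
  have "\<not> (Ysm A t \<omega> \<ge> exp 16 / dk)" using nb[of k] om tT unfolding Bad_def dk_def A_def by auto
  then have Ylt: "Ysm A t \<omega> < exp 16 / dk" by simp
  have "th A t * ell t \<omega> - (\<Sum>r\<in>{1..t}. qq A r) < ln (exp 16 / dk)"
  proof -
    have "ln (Ysm A t \<omega>) < ln (exp 16 / dk)" using Ylt dk0 by (subst ln_less_cancel_iff) (auto simp: Ysm_def)
    then show ?thesis unfolding Ysm_def by simp
  qed
  also have "ln (exp 16 / dk) = 16 + ln (1 / \<delta>) + ln ((real k + 1) * (real k + 2))"
    unfolding dk_def using d by (simp add: ln_div ln_mult)
  finally have m1: "th A t * ell t \<omega> < 16 + ln (1 / \<delta>) + ln ((real k + 1) * (real k + 2)) + (\<Sum>r\<in>{1..t}. qq A r)"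
    by simp
  have qsum: "(\<Sum>r\<in>{1..t}. qq A r) \<le> 1 / 8"
  proof -
    have "(\<Sum>r\<in>{1..t}. qq A r) \<le> real (card {1..t}) * (1 / (8 * A))"
      using hA1 a33 by (intro sum_bounded_above) (auto simp: qq_def aa_def field_simps)
    also have "\<dots> = real t / (8 * A)" by simp
    also have "\<dots> \<le> 1 / 8" using hA1 a33 unfolding a_def by (simp add: field_simps)
    finally show ?thesis .
  qed
  have thlow: "a / 24 \<le> th A t"
  proof -
    have "a / 24 = a\<^sup>2 / (8 * (3 * a))" using a33 by (simp add: power2_eq_square)
    also have "\<dots> \<le> a\<^sup>2 / (8 * (a + A))" using hA2 a33 hA1
      by (intro divide_left_mono mult_left_mono) auto
    finally show ?thesis unfolding th_def aa_def a_def .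
  qed
  have nk: "ln ((real k + 1) * (real k + 2)) \<le> 4 + 2 * ln (ln (real t + 9))" by (rule numeric_k[OF pk])
  define V where "V = ln (1 / \<delta>) + 2 * ln (ln (real t + 9))"
  have lnd: "ln (1 / \<delta>) \<ge> 0" using d by simp
  have V1: "V \<ge> 1" unfolding V_def using lnd lnln_ge[of t] by simp
  have "a / 24 * ell t \<omega> \<le> th A t * ell t \<omega>" using thlow ell_nn by (intro mult_right_mono) auto
  also have "\<dots> < 16 + 1/8 + 4 + V" using m1 qsum nk unfolding V_def by linarith
  also have "\<dots> \<le> 42 * V" using V1 by simp
  finally have "ell t \<omega> < 1008 * V / a" using a33 by (simp add: field_simps)
  then have "B\<^sup>2 / lam\<^sup>2 * ell t \<omega> \<le> B\<^sup>2 / lam\<^sup>2 * (1008 * V / a)"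
    using B_pos lam_pos by (intro mult_left_mono) auto
  moreover have "B\<^sup>2 / lam\<^sup>2 * ell t \<omega> = (norm (x t \<omega> - xstar))\<^sup>2"
    unfolding ell_def using B_pos lam_pos by (simp add: field_simps)
  ultimately show ?thesis unfolding V_def a_def by (simp add: field_simps)
qed

lemma final:
  assumes d: "0 < \<delta>" "\<delta> < 1"
  shows "measure M {\<omega> \<in> space M. \<forall>t\<ge>1.
           (norm (x t \<omega> - xstar))\<^sup>2
             \<le> 1008 * (B\<^sup>2 / lam\<^sup>2) * ((ln (1 / \<delta>) + 2 * ln (ln (real t + 9))) / (real t + 32))}
         \<ge> 1 - \<delta>"
proof -
  interpret prob_space M by (rule PS)
  define dk where "dk k = \<delta> / ((real k + 1) * (real k + 2))" for k :: nat
  define U where "U = (\<Union>k. Bad k (dk k))"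
  define S where "S = {\<omega> \<in> space M. \<forall>t\<ge>1.
           (norm (x t \<omega> - xstar))\<^sup>2
             \<le> 1008 * (B\<^sup>2 / lam\<^sup>2) * ((ln (1 / \<delta>) + 2 * ln (ln (real t + 9))) / (real t + 32))}"
  have dk0: "dk k > 0" for k unfolding dk_def using d by simp
  have sums: "dk sums \<delta>"
  proof -
    have "(\<lambda>n. (- \<delta> / (real (Suc n) + 1)) - (- \<delta> / (real n + 1))) sums (0 - (- \<delta> / (real 0 + 1)))"
    proof (rule telescope_sums)
      have "(\<lambda>n. \<delta> * inverse (real (Suc n))) \<longlonglongrightarrow> \<delta> * 0"
        by (intro tendsto_mult tendsto_const LIMSEQ_inverse_real_of_nat)
      then have "(\<lambda>n. \<delta> / (real n + 1)) \<longlonglongrightarrow> 0" by (simp add: divide_inverse add.commute)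
      from tendsto_minus[OF this] show "(\<lambda>n. - \<delta> / (real n + 1)) \<longlonglongrightarrow> 0" by simp
    qed
    moreover have "(- \<delta> / (real (Suc n) + 1)) - (- \<delta> / (real n + 1)) = dk n" for n
      unfolding dk_def by (simp add: field_simps)
    ultimately show ?thesis by simp
  qed
  have [measurable]: "x t \<in> borel_measurable M" for t by (rule meas_M[OF x_meas])
  have SM: "S \<in> sets M" unfolding S_def by measurable
  have US: "range (\<lambda>k. Bad k (dk k)) \<subseteq> sets M" using Bad_sets by auto
  have summ: "summable (\<lambda>k. measure M (Bad k (dk k)))"
    by (rule summable_comparison_test[OF _ sums_summable[OF sums]])
       (use epoch dk0 in \<open>auto intro!: exI[of _ 0]\<close>)
  have "measure M U \<le> (\<Sum>k. measure M (Bad k (dk k)))"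
    unfolding U_def by (rule finite_measure_subadditive_countably[OF US summ])
  also have "\<dots> \<le> (\<Sum>k. dk k)"
    by (rule suminf_le[OF _ summ sums_summable[OF sums]]) (use epoch dk0 in auto)
  also have "\<dots> = \<delta>" using sums by (simp add: sums_iff)
  finally have mU: "measure M U \<le> \<delta>" .
  have sub: "space M - U \<subseteq> S"
    unfolding S_def U_def using good_point[OF d] dk_def by auto
  have UM: "U \<in> sets M" unfolding U_def using US by auto
  have "1 - \<delta> \<le> measure M (space M - U)" using prob_compl[OF UM] mU by simp
  also have "\<dots> \<le> measure M S" using sub SM by (intro finite_measure_mono) auto
  finally show ?thesis unfolding S_def .
qed

end

theorem corollary1:
  fixes M :: "'w measure"
    and X :: "'x::euclidean_space set"
    and F :: "'x \<Rightarrow> real"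
    and gradF :: "'x \<Rightarrow> 'x"
    and lam B \<delta> :: real
    and xstar x0 :: 'x
    and \<xi> :: "nat \<Rightarrow> 'w \<Rightarrow> 'e::euclidean_space"
    and g :: "'x \<Rightarrow> 'e \<Rightarrow> 'x"
    and \<eta> :: "nat \<Rightarrow> real"
  assumes "prob_space M"
    and "compact X" and "convex X" and "interior X \<noteq> {}"
    and diff: "\<And>x. x \<in> X \<Longrightarrow> (F has_derivative (\<lambda>h. gradF x \<bullet> h)) (at x within X)"
    and "lam > 0"
    and strong_conv: "\<And>x y. x \<in> X \<Longrightarrow> y \<in> X \<Longrightarrow>
           F y \<ge> F x + (y - x) \<bullet> gradF x + lam / 2 * (norm (y - x))\<^sup>2"
    and "xstar \<in> X" and "\<And>y. y \<in> X \<Longrightarrow> F xstar \<le> F y"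
    and iid_indep: "prob_space.indep_vars M (\<lambda>_. borel) \<xi> {1..}"
    and iid_dist: "\<And>i. i \<ge> 1 \<Longrightarrow> distr M borel (\<xi> i) = distr M borel (\<xi> 1)"
    and g_meas: "(\<lambda>(x, e). g x e) \<in> borel_measurable (restrict_space borel (X \<times> UNIV))"
    and "B > 0"
    and "x0 \<in> X"
    and step: "\<And>t. \<eta> t = 1 / (lam * (real t + 32))"
    and unbiased: "\<And>t b. t \<ge> 1 \<Longrightarrow> b \<in> Basis \<Longrightarrow>
           AE \<omega> in M. real_cond_exp M (sgd_filtration M \<xi> (t - 1))
               (\<lambda>\<omega>. g (sgd_iter X \<eta> g x0 \<xi> (t - 1) \<omega>) (\<xi> t \<omega>) \<bullet> b) \<omega>
             = gradF (sgd_iter X \<eta> g x0 \<xi> (t - 1) \<omega>) \<bullet> b"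
    and bounded: "AE \<omega> in M. \<forall>t\<ge>1.
           max (norm (g (sgd_iter X \<eta> g x0 \<xi> (t - 1) \<omega>) (\<xi> t \<omega>) - gradF (sgd_iter X \<eta> g x0 \<xi> (t - 1) \<omega>)))
               (norm (g (sgd_iter X \<eta> g x0 \<xi> (t - 1) \<omega>) (\<xi> t \<omega>))) \<le> B"
    and "0 < \<delta>" and "\<delta> < 1"
  shows "measure M {\<omega> \<in> space M. \<forall>t\<ge>1.
           (norm (sgd_iter X \<eta> g x0 \<xi> t \<omega> - xstar))\<^sup>2
             \<le> 1008 * (B\<^sup>2 / lam\<^sup>2) * ((ln (1 / \<delta>) + 2 * ln (ln (real t + 9))) / (real t + 32))}
         \<ge> 1 - \<delta>"
proof -
  have xi: "\<And>i. i \<ge> 1 \<Longrightarrow> \<xi> i \<in> borel_measurable M"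
    using iid_indep unfolding prob_space.indep_vars_def[OF assms(1)] by auto
  interpret sgd_loc M X F gradF lam B xstar x0 \<xi> g \<eta>
    by (rule sgd_loc.intro) (use assms xi in auto)
  show ?thesis by (rule final) (use assms in auto)
qed

end
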